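(* Let $\boldsymbol{x}=\{x_1,\dots,x_n\}$, let $\mathcal F_c(\boldsymbol{x})$ be the free commutative loop on $\boldsymbol{x}$, let $L$ be a commutative loop with identity $1$, let $\alpha\colon\mathcal F_c(\boldsymbol{x})\to L$ be a surjective homomorphism, and let $A$, $(L,A)$, $\delta$, $\psi$ and reduced words be as in the context. Let $w,w'\in W(\boldsymbol{x})$ be reduced words such that (i) $w'\notin\mathrm{Comp}(w)$; (ii) $\alpha(w)=\alpha(w')$; (iii) whenever $u,v\in\mathrm{Comp}(w)\cup\mathrm{Comp}(w')$ satisfy $\alpha(u)=\alpha(v)$, either $u=v$ or $\{u,v\}=\{w,w'\}$. Then there exists a free generator of $A$ (either some $x_i$ or some $\langle l_1,l_2\rangle$) whose coefficient in $\psi(w)$ is $0$ and whose coefficient in $\psi(w')$ is $\pm1$.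
   Context: Words: $W(\boldsymbol{x})$ is the set of formal expressions defined recursively to contain $e$ and every $x_i$, and, with $u,v$, the expressions $uv$, $u\backslash v$, $u/v$ (the free algebra on $\boldsymbol{x}$ with one nullary and three binary operations). Components: $\mathrm{Comp}(e)=\{e\}$, $\mathrm{Comp}(x_i)=\{e,x_i\}$, and $\mathrm{Comp}(w)=\mathrm{Comp}(u)\cup\mathrm{Comp}(v)\cup\{w\}$ if $w$ is $uv$, $u\backslash v$ or $u/v$. Fix a total order $<$ on $W(\boldsymbol{x})$. A word is reduced if none of its components is of one of the forms: $uv$ with $u<v$; $u/v$; $(v\backslash u)\backslash u$; $v\backslash(uv)$; $u\backslash(uv)$; $(u\backslash v)u$; $ev$; $u(u\backslash v)$; $e\backslash v$; $ue$; $v\backslash v$. Each word $w$ determines an element of $\mathcal F_c(\boldsymbol{x})$ (interpreting $e$ as the identity, and $\backslash,/$ as left and right division $a\backslash b=L_a^{-1}b$, $b/a=R_a^{-1}b$), and $\alpha(w)$, $\psi(w)$ refer to this element. Let $A$ be the free abelian group with free generators the symbols $x_1,\dots,x_n$ and the symbols $\langle l_1,l_2\rangle$ for $l_1,l_2\in L\setminus\{1\}$, where $\langle l_1,l_2\rangle=\langle l_2,l_1\rangle$; set $\langle l,1\rangle=\langle1,l\rangle=0$. Let $(L,A)$ be the set $L\times A$ with product $(l_1,a_1)(l_2,a_2)=(l_1l_2,\,a_1+a_2+\langle l_1,l_2\rangle)$, a commutative loop. Let $\delta\colon\mathcal F_c(\boldsymbol{x})\to(L,A)$ be the homomorphism with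 $\delta(x_i)=(\alpha(x_i),x_i)$; then $\delta(w)=(\alpha(w),\psi(w))$, which defines $\psi\colon\mathcal F_c(\boldsymbol{x})\to A$. *)

theory Defs
  imports Main "HOL-Library.Uprod"
begin

datatype word = E | Var nat | Mul word word | LDiv word word | RDiv word word
  (* Mul u v = uv,  LDiv u v = u\v,  RDiv u v = u/v *)

fun vars :: "word \<Rightarrow> nat set" where
  "vars E = {}"
| "vars (Var i) = {i}"
| "vars (Mul u v) = vars u \<union> vars v"
| "vars (LDiv u v) = vars u \<union> vars v"
| "vars (RDiv u v) = vars u \<union> vars v"

definition words_over :: "nat \<Rightarrow> word set" where
  "words_over n = {w. vars w \<subseteq> {1..n}}"

fun Comp :: "word \<Rightarrow> word set" where
  "Comp E = {E}"
| "Comp (Var i) = {E, Var i}"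
| "Comp (Mul u v) = Comp u \<union> Comp v \<union> {Mul u v}"
| "Comp (LDiv u v) = Comp u \<union> Comp v \<union> {LDiv u v}"
| "Comp (RDiv u v) = Comp u \<union> Comp v \<union> {RDiv u v}"

definition strict_total_order_on :: "word set \<Rightarrow> (word \<Rightarrow> word \<Rightarrow> bool) \<Rightarrow> bool" where
  "strict_total_order_on S lt \<longleftrightarrow>
     (\<forall>u\<in>S. \<not> lt u u) \<and>
     (\<forall>u\<in>S. \<forall>v\<in>S. \<forall>z\<in>S. lt u v \<longrightarrow> lt v z \<longrightarrow> lt u z) \<and>
     (\<forall>u\<in>S. \<forall>v\<in>S. u \<noteq> v \<longrightarrow> lt u v \<or> lt v u)"

definition forbidden :: "(word \<Rightarrow> word \<Rightarrow> bool) \<Rightarrow> word \<Rightarrow> bool" where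
  "forbidden lt c \<longleftrightarrow>
     (\<exists>u v. c = Mul u v \<and> lt u v) \<or>
     (\<exists>u v. c = RDiv u v) \<or>
     (\<exists>u v. c = LDiv (LDiv v u) u) \<or>
     (\<exists>u v. c = LDiv v (Mul u v)) \<or>
     (\<exists>u v. c = LDiv u (Mul u v)) \<or>
     (\<exists>u v. c = Mul (LDiv u v) u) \<or>
     (\<exists>v. c = Mul E v) \<or>
     (\<exists>u v. c = Mul u (LDiv u v)) \<or>
     (\<exists>v. c = LDiv E v) \<or>
     (\<exists>u. c = Mul u E) \<or>
     (\<exists>v. c = LDiv v v)"

definition reduced :: "(word \<Rightarrow> word \<Rightarrow> bool) \<Rightarrow> word \<Rightarrow> bool" where
  "reduced lt w \<longleftrightarrow> (\<forall>c\<in>Comp w. \<not> forbidden lt c)"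

definition comm_loop :: "'l set \<Rightarrow> ('l \<Rightarrow> 'l \<Rightarrow> 'l) \<Rightarrow> 'l \<Rightarrow> bool" where
  "comm_loop C m one \<longleftrightarrow>
     one \<in> C \<and>
     (\<forall>a\<in>C. \<forall>b\<in>C. m a b \<in> C) \<and>
     (\<forall>a\<in>C. m one a = a \<and> m a one = a) \<and>
     (\<forall>a\<in>C. \<forall>b\<in>C. \<exists>!x. x \<in> C \<and> m a x = b) \<and>
     (\<forall>a\<in>C. \<forall>b\<in>C. \<exists>!y. y \<in> C \<and> m y a = b) \<and>
     (\<forall>a\<in>C. \<forall>b\<in>C. m a b = m b a)"

definition ldiv :: "'l set \<Rightarrow> ('l \<Rightarrow> 'l \<Rightarrow> 'l) \<Rightarrow> 'l \<Rightarrow> 'l \<Rightarrow> 'l" where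
  "ldiv C m a b = (THE x. x \<in> C \<and> m a x = b)"

definition rdiv :: "'l set \<Rightarrow> ('l \<Rightarrow> 'l \<Rightarrow> 'l) \<Rightarrow> 'l \<Rightarrow> 'l \<Rightarrow> 'l" where
  "rdiv C m b a = (THE y. y \<in> C \<and> m y a = b)"

fun eval :: "'l set \<Rightarrow> ('l \<Rightarrow> 'l \<Rightarrow> 'l) \<Rightarrow> 'l \<Rightarrow> (nat \<Rightarrow> 'l) \<Rightarrow> word \<Rightarrow> 'l" where
  "eval C m one g E = one"
| "eval C m one g (Var i) = g i"
| "eval C m one g (Mul u v) = m (eval C m one g u) (eval C m one g v)"
| "eval C m one g (LDiv u v) = ldiv C m (eval C m one g u) (eval C m one g v)"
| "eval C m one g (RDiv u v) = rdiv C m (eval C m one g u) (eval C m one g v)"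

text \<open>Free generators of A: the symbols x_i (i = 1..n) and <l1,l2> (unordered, l1,l2 in L - {1}).\<close>
datatype 'l gen = GX nat | GP "'l uprod"

definition valid_gen :: "nat \<Rightarrow> 'l set \<Rightarrow> 'l \<Rightarrow> 'l gen \<Rightarrow> bool" where
  "valid_gen n C one g \<longleftrightarrow>
     (\<exists>i. 1 \<le> i \<and> i \<le> n \<and> g = GX i) \<or>
     (\<exists>l1 l2. l1 \<in> C - {one} \<and> l2 \<in> C - {one} \<and> g = GP (Upair l1 l2))"

definition A_carrier :: "nat \<Rightarrow> 'l set \<Rightarrow> 'l \<Rightarrow> ('l gen \<Rightarrow> int) set" where
  "A_carrier n C one = {f. finite {g. f g \<noteq> 0} \<and> (\<forall>g. f g \<noteq> 0 \<longrightarrow> valid_gen n C one g)}"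

definition basis :: "'l gen \<Rightarrow> ('l gen \<Rightarrow> int)" where
  "basis g = (\<lambda>h. if h = g then 1 else 0)"

definition bracket :: "'l \<Rightarrow> 'l \<Rightarrow> 'l \<Rightarrow> ('l gen \<Rightarrow> int)" where
  "bracket one l1 l2 = (if l1 = one \<or> l2 = one then (\<lambda>_. 0) else basis (GP (Upair l1 l2)))"

definition LA_carrier :: "nat \<Rightarrow> 'l set \<Rightarrow> 'l \<Rightarrow> ('l \<times> ('l gen \<Rightarrow> int)) set" where
  "LA_carrier n C one = C \<times> A_carrier n C one"

definition LA_mult :: "('l \<Rightarrow> 'l \<Rightarrow> 'l) \<Rightarrow> 'l \<Rightarrow>
    ('l \<times> ('l gen \<Rightarrow> int)) \<Rightarrow> ('l \<times> ('l gen \<Rightarrow> int)) \<Rightarrow> ('l \<times> ('l gen \<Rightarrow> int))" where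
  "LA_mult m one p q =
     (m (fst p) (fst q), (\<lambda>g. snd p g + snd q g + bracket one (fst p) (fst q) g))"

definition LA_one :: "'l \<Rightarrow> ('l \<times> ('l gen \<Rightarrow> int))" where
  "LA_one one = (one, (\<lambda>_. 0))"

text \<open>delta(w) = value of w in (L,A) with x_i |-> (alpha(x_i), x_i); psi(w) = its A-component.
  Here a i = alpha(x_i).\<close>
definition delta :: "nat \<Rightarrow> 'l set \<Rightarrow> ('l \<Rightarrow> 'l \<Rightarrow> 'l) \<Rightarrow> 'l \<Rightarrow> (nat \<Rightarrow> 'l) \<Rightarrow> word
    \<Rightarrow> 'l \<times> ('l gen \<Rightarrow> int)" where
  "delta n C m one a w =
     eval (LA_carrier n C one) (LA_mult m one) (LA_one one) (\<lambda>i. (a i, basis (GX i))) w"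

definition psi :: "nat \<Rightarrow> 'l set \<Rightarrow> ('l \<Rightarrow> 'l \<Rightarrow> 'l) \<Rightarrow> 'l \<Rightarrow> (nat \<Rightarrow> 'l) \<Rightarrow> word
    \<Rightarrow> ('l gen \<Rightarrow> int)" where
  "psi n C m one a w = snd (delta n C m one a w)"

end

theory Submission
  imports Defs
begin


lemma Comp_self: "t \<in> Comp t"
  by (cases t) auto

lemma E_Comp: "E \<in> Comp t"
  by (induction t) auto

lemma Comp_trans: "c \<in> Comp t \<Longrightarrow> Comp c \<subseteq> Comp t"
  by (induction t) auto

fun wsize :: "word \<Rightarrow> nat" where
  "wsize E = 1" | "wsize (Var i) = 2" | "wsize (Mul u v) = wsize u + wsize v + 1"
| "wsize (LDiv u v) = wsize u + wsize v + 1" | "wsize (RDiv u v) = wsize u + wsize v + 1"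

lemma Comp_size: "c \<in> Comp t \<Longrightarrow> wsize c \<le> wsize t"
  by (induction t) auto

lemma Comp_vars: "c \<in> Comp t \<Longrightarrow> vars c \<subseteq> vars t"
  by (induction t) auto

lemma reduced_Comp: "reduced lt t \<Longrightarrow> c \<in> Comp t \<Longrightarrow> reduced lt c"
  unfolding reduced_def using Comp_trans by (meson subsetD)

definition noR :: "word \<Rightarrow> bool" where
  "noR t \<longleftrightarrow> (\<forall>c\<in>Comp t. \<forall>u v. c \<noteq> RDiv u v)"

lemma reduced_noR: "reduced lt t \<Longrightarrow> noR t"
  unfolding noR_def
proof (intro ballI allI)
  fix c u v assume r: "reduced lt t" and c: "c \<in> Comp t"
  then have "\<not> forbidden lt c" unfolding reduced_def by blast
  moreover have "forbidden lt (RDiv u v)" unfolding forbidden_def by blast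
  ultimately show "c \<noteq> RDiv u v" by blast
qed

lemma forb:
 "forbidden lt (RDiv u v)"
 "lt u v \<Longrightarrow> forbidden lt (Mul u v)"
 "forbidden lt (LDiv (LDiv v u) u)"
 "forbidden lt (LDiv v (Mul u v))"
 "forbidden lt (LDiv u (Mul u v))"
 "forbidden lt (Mul (LDiv u v) u)"
 "forbidden lt (Mul E v)"
 "forbidden lt (Mul u (LDiv u v))"
 "forbidden lt (LDiv E v)"
 "forbidden lt (Mul u E)"
 "forbidden lt (LDiv v v)"
  unfolding forbidden_def by blast+

context
  fixes n :: nat and C :: "'l set" and m :: "'l \<Rightarrow> 'l \<Rightarrow> 'l" and one :: 'l
    and a :: "nat \<Rightarrow> 'l"
  assumes L: "comm_loop C m one"
    and a_in: "\<forall>i\<in>{1..n}. a i \<in> C"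
begin

lemma L_one_in: "one \<in> C"
  using L[unfolded comm_loop_def] by (rule conjunct1)
lemma L_clos: "\<forall>x\<in>C. \<forall>y\<in>C. m x y \<in> C"
  using L[unfolded comm_loop_def] by (rule conjunct1[OF conjunct2])
lemma L_id: "\<forall>x\<in>C. m one x = x \<and> m x one = x"
  using L[unfolded comm_loop_def] by (rule conjunct1[OF conjunct2[OF conjunct2]])
lemma L_lex: "\<forall>x\<in>C. \<forall>y\<in>C. \<exists>!z. z \<in> C \<and> m x z = y"
  using L[unfolded comm_loop_def] by (rule conjunct1[OF conjunct2[OF conjunct2[OF conjunct2]]])
lemma L_rex: "\<forall>x\<in>C. \<forall>y\<in>C. \<exists>!z. z \<in> C \<and> m z x = y"
  using L[unfolded comm_loop_def] by (rule conjunct1[OF conjunct2[OF conjunct2[OF conjunct2[OF conjunct2]]]])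
lemma L_comm: "\<forall>x\<in>C. \<forall>y\<in>C. m x y = m y x"
  using L[unfolded comm_loop_def] by (rule conjunct2[OF conjunct2[OF conjunct2[OF conjunct2[OF conjunct2]]]])

lemma ldiv_props:
  assumes "x \<in> C" "y \<in> C"
  shows "ldiv C m x y \<in> C \<and> m x (ldiv C m x y) = y"
proof -
  have "\<exists>!z. z \<in> C \<and> m x z = y" using bspec[OF bspec[OF L_lex assms(1)] assms(2)] .
  then show ?thesis unfolding ldiv_def by (rule theI')
qed

lemma ldiv_unique:
  assumes "x \<in> C" "y \<in> C" "z \<in> C" "m x z = y"
  shows "ldiv C m x y = z"
proof -
  have ex: "\<exists>!z. z \<in> C \<and> m x z = y" using bspec[OF bspec[OF L_lex assms(1)] assms(2)] .
  have "z \<in> C \<and> m x z = y" using assms(3,4) by (rule conjI)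
  with ex show ?thesis unfolding ldiv_def by (rule the1_equality)
qed

lemma rdiv_in:
  assumes "x \<in> C" "y \<in> C"
  shows "rdiv C m y x \<in> C"
proof -
  have "\<exists>!z. z \<in> C \<and> m z x = y" using bspec[OF bspec[OF L_rex assms(1)] assms(2)] .
  then have "(THE z. z \<in> C \<and> m z x = y) \<in> C \<and> m (THE z. z \<in> C \<and> m z x = y) x = y" by (rule theI')
  then show ?thesis unfolding rdiv_def by (rule conjunct1)
qed

lemma mult_in: "x \<in> C \<Longrightarrow> y \<in> C \<Longrightarrow> m x y \<in> C"
  using L_clos by blast

lemma comm: "x \<in> C \<Longrightarrow> y \<in> C \<Longrightarrow> m x y = m y x"
  using L_comm by blast

lemma one_in: "one \<in> C" and one_r: "x \<in> C \<Longrightarrow> m x one = x"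
  using L_one_in L_id by blast+

lemma eval_in: "vars t \<subseteq> {1..n} \<Longrightarrow> eval C m one a t \<in> C"
  by (induction t) (auto simp: one_in a_in mult_in ldiv_props rdiv_in)

lemma A_zero: "(\<lambda>_. 0) \<in> A_carrier n C one"
  unfolding A_carrier_def by auto

lemma A_basis: "1 \<le> i \<Longrightarrow> i \<le> n \<Longrightarrow> basis (GX i) \<in> A_carrier n C one"
  unfolding A_carrier_def basis_def valid_gen_def by auto

lemma A_bracket: "x \<in> C \<Longrightarrow> y \<in> C \<Longrightarrow> bracket one x y \<in> A_carrier n C one"
  unfolding A_carrier_def bracket_def basis_def valid_gen_def by auto

lemma A_add: "f \<in> A_carrier n C one \<Longrightarrow> h \<in> A_carrier n C one \<Longrightarrow> (\<lambda>g. f g + h g) \<in> A_carrier n C one"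
proof -
  assume f: "f \<in> A_carrier n C one" and h: "h \<in> A_carrier n C one"
  have "{g. f g + h g \<noteq> 0} \<subseteq> {g. f g \<noteq> 0} \<union> {g. h g \<noteq> 0}" by auto
  then show ?thesis using f h unfolding A_carrier_def by (auto intro: finite_subset)
qed

lemma A_neg: "f \<in> A_carrier n C one \<Longrightarrow> (\<lambda>g. - f g) \<in> A_carrier n C one"
  unfolding A_carrier_def by auto

lemma LA_ldiv:
  assumes p: "p \<in> LA_carrier n C one" and q: "q \<in> LA_carrier n C one"
  shows "ldiv (LA_carrier n C one) (LA_mult m one) p q =
    (ldiv C m (fst p) (fst q), \<lambda>g. snd q g - snd p g - bracket one (fst p) (ldiv C m (fst p) (fst q)) g)"
    (is "_ = ?x")
proof -
  have pc: "fst p \<in> C" "snd p \<in> A_carrier n C one" and qc: "fst q \<in> C" "snd q \<in> A_carrier n C one"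
    using p q unfolding LA_carrier_def by auto
  have ld: "ldiv C m (fst p) (fst q) \<in> C" "m (fst p) (ldiv C m (fst p) (fst q)) = fst q"
    using ldiv_props pc qc by auto
  have xin: "?x \<in> LA_carrier n C one"
  proof -
    have "(\<lambda>g. snd q g + (- snd p g) + (- bracket one (fst p) (ldiv C m (fst p) (fst q)) g)) \<in> A_carrier n C one"
      by (intro A_add A_neg A_bracket pc qc ld)
    then show ?thesis unfolding LA_carrier_def using ld by (simp add: algebra_simps)
  qed
  have xeq: "LA_mult m one p ?x = q"
    unfolding LA_mult_def using ld by (simp add: prod_eq_iff)
  show ?thesis unfolding ldiv_def[of "LA_carrier n C one" "LA_mult m one"]
  proof (rule the_equality)
    show "?x \<in> LA_carrier n C one \<and> LA_mult m one p ?x = q" using xin xeq by blast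
  next
    fix z assume z: "z \<in> LA_carrier n C one \<and> LA_mult m one p z = q"
    then have zc: "fst z \<in> C" unfolding LA_carrier_def by auto
    have "m (fst p) (fst z) = fst q" using z unfolding LA_mult_def by auto
    then have fz: "fst z = ldiv C m (fst p) (fst q)" using ldiv_unique pc qc zc by metis
    have "\<And>g. snd p g + snd z g + bracket one (fst p) (fst z) g = snd q g"
      using z unfolding LA_mult_def by auto
    then have "snd z = (\<lambda>g. snd q g - snd p g - bracket one (fst p) (ldiv C m (fst p) (fst q)) g)"
      using fz by (auto simp: fun_eq_iff algebra_simps)
    then show "z = ?x" using fz by (simp add: prod_eq_iff)
  qed
qed


lemma delta_props:
  "vars t \<subseteq> {1..n} \<Longrightarrow> noR t \<Longrightarrow> (delta n C m one a) t \<in> LA_carrier n C one \<and> fst ((delta n C m one a) t) = (eval C m one a) t"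
proof (induction t)
  case E
  then show ?case by (simp add: delta_def LA_one_def LA_carrier_def one_in A_zero)
next
  case (Var i)
  then show ?case by (simp add: delta_def LA_carrier_def a_in A_basis)
next
  case (Mul u v)
  then have nu: "noR u" "noR v" unfolding noR_def by auto
  have IH: "(delta n C m one a) u \<in> LA_carrier n C one" "fst ((delta n C m one a) u) = (eval C m one a) u" "(delta n C m one a) v \<in> LA_carrier n C one" "fst ((delta n C m one a) v) = (eval C m one a) v"
    using Mul nu by auto
  have eq: "(delta n C m one a) (Mul u v) = LA_mult m one ((delta n C m one a) u) ((delta n C m one a) v)" by (simp add: delta_def)
  have c: "fst ((delta n C m one a) u) \<in> C" "fst ((delta n C m one a) v) \<in> C" "snd ((delta n C m one a) u) \<in> A_carrier n C one" "snd ((delta n C m one a) v) \<in> A_carrier n C one"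
    using IH unfolding LA_carrier_def by auto
  have "(\<lambda>g. snd ((delta n C m one a) u) g + snd ((delta n C m one a) v) g + bracket one (fst ((delta n C m one a) u)) (fst ((delta n C m one a) v)) g) \<in> A_carrier n C one"
    by (intro A_add A_bracket c)
  then show ?case using eq IH c mult_in unfolding LA_mult_def LA_carrier_def by simp
next
  case (LDiv u v)
  then have nu: "noR u" "noR v" unfolding noR_def by auto
  have IH: "(delta n C m one a) u \<in> LA_carrier n C one" "fst ((delta n C m one a) u) = (eval C m one a) u" "(delta n C m one a) v \<in> LA_carrier n C one" "fst ((delta n C m one a) v) = (eval C m one a) v"
    using LDiv nu by auto
  have eq: "(delta n C m one a) (LDiv u v) = ldiv (LA_carrier n C one) (LA_mult m one) ((delta n C m one a) u) ((delta n C m one a) v)" by (simp add: delta_def)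
  have c: "fst ((delta n C m one a) u) \<in> C" "fst ((delta n C m one a) v) \<in> C" "snd ((delta n C m one a) u) \<in> A_carrier n C one" "snd ((delta n C m one a) v) \<in> A_carrier n C one"
    using IH unfolding LA_carrier_def by auto
  have ld: "ldiv C m (fst ((delta n C m one a) u)) (fst ((delta n C m one a) v)) \<in> C" using ldiv_props c by auto
  have "(\<lambda>g. snd ((delta n C m one a) v) g + (- snd ((delta n C m one a) u) g) + (- bracket one (fst ((delta n C m one a) u)) (ldiv C m (fst ((delta n C m one a) u)) (fst ((delta n C m one a) v))) g)) \<in> A_carrier n C one"
    by (intro A_add A_neg A_bracket c ld)
  then show ?case using eq IH c ld LA_ldiv[OF IH(1) IH(3)] unfolding LA_carrier_def
    by (simp add: algebra_simps)
next
  case (RDiv u v)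
  then show ?case unfolding noR_def by auto
qed

lemma psi_Mul:
  "vars (Mul u v) \<subseteq> {1..n} \<Longrightarrow> noR (Mul u v) \<Longrightarrow>
   psi n C m one a (Mul u v) g = psi n C m one a u g + psi n C m one a v g + bracket one ((eval C m one a) u) ((eval C m one a) v) g"
proof -
  assume "vars (Mul u v) \<subseteq> {1..n}" "noR (Mul u v)"
  then have "vars u \<subseteq> {1..n}" "noR u" "vars v \<subseteq> {1..n}" "noR v" unfolding noR_def by auto
  then have "fst ((delta n C m one a) u) = (eval C m one a) u" "fst ((delta n C m one a) v) = (eval C m one a) v" using delta_props by auto
  then show ?thesis unfolding psi_def by (simp add: delta_def LA_mult_def)
qed

lemma psi_LDiv:
  "vars (LDiv u v) \<subseteq> {1..n} \<Longrightarrow> noR (LDiv u v) \<Longrightarrow>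
   psi n C m one a (LDiv u v) g = psi n C m one a v g - psi n C m one a u g - bracket one ((eval C m one a) u) ((eval C m one a) (LDiv u v)) g"
proof -
  assume "vars (LDiv u v) \<subseteq> {1..n}" "noR (LDiv u v)"
  then have "vars u \<subseteq> {1..n}" "noR u" "vars v \<subseteq> {1..n}" "noR v" unfolding noR_def by auto
  then have IH: "fst ((delta n C m one a) u) = (eval C m one a) u" "fst ((delta n C m one a) v) = (eval C m one a) v" "(delta n C m one a) u \<in> LA_carrier n C one" "(delta n C m one a) v \<in> LA_carrier n C one"
    using delta_props by auto
  have eq: "(delta n C m one a) (LDiv u v) = ldiv (LA_carrier n C one) (LA_mult m one) ((delta n C m one a) u) ((delta n C m one a) v)" by (simp add: delta_def)
  show ?thesis unfolding psi_def using LA_ldiv[OF IH(3) IH(4)] eq IH by simp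
qed

lemma psi_Var: "psi n C m one a (Var i) = basis (GX i)"
  unfolding psi_def delta_def by simp

lemma psi_zero:
  "vars t \<subseteq> {1..n} \<Longrightarrow> noR t \<Longrightarrow>
   (\<forall>j. Var j \<in> Comp t \<longrightarrow> g \<noteq> GX j) \<Longrightarrow>
   (\<forall>p q. Mul p q \<in> Comp t \<longrightarrow> bracket one ((eval C m one a) p) ((eval C m one a) q) g = 0) \<Longrightarrow>
   (\<forall>p q. LDiv p q \<in> Comp t \<longrightarrow> bracket one ((eval C m one a) p) ((eval C m one a) (LDiv p q)) g = 0) \<Longrightarrow>
   psi n C m one a t g = 0"
proof (induction t)
  case E
  then show ?case by (simp add: psi_def delta_def LA_one_def)
next
  case (Var i)
  then show ?case by (simp add: psi_Var basis_def)
next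
  case (Mul u v)
  then have "noR u" "noR v" unfolding noR_def by auto
  then show ?case using Mul psi_Mul[OF Mul.prems(1,2)] by auto
next
  case (LDiv u v)
  then have "noR u" "noR v" unfolding noR_def by auto
  then show ?case using LDiv psi_LDiv[OF LDiv.prems(1,2)] by auto
next
  case (RDiv u v)
  then show ?case unfolding noR_def by auto
qed

end



lemma Comp_lt: "c \<in> Comp t \<Longrightarrow> c = t \<or> wsize c < wsize t"
  by (induction t) (auto dest: Comp_size)

lemma bracket_GX: "bracket one x y (GX i) = 0"
  unfolding bracket_def basis_def by auto

lemma bracket_nz: "bracket one x y (GP (Upair l1 l2)) \<noteq> 0 \<Longrightarrow>
   (x = l1 \<and> y = l2) \<or> (x = l2 \<and> y = l1)"
  unfolding bracket_def basis_def by (auto split: if_splits)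

lemma bracket_one: "x \<noteq> one \<Longrightarrow> y \<noteq> one \<Longrightarrow> bracket one x y (GP (Upair x y)) = 1"
  unfolding bracket_def basis_def by auto

theorem mainTheorem9:
  fixes n :: nat
    and C :: "'l set" and m :: "'l \<Rightarrow> 'l \<Rightarrow> 'l" and one :: 'l
    and a :: "nat \<Rightarrow> 'l"
    and lt :: "word \<Rightarrow> word \<Rightarrow> bool"
    and w w' :: word
  assumes L: "comm_loop C m one"
    and a_in: "\<forall>i\<in>{1..n}. a i \<in> C"
    and alpha_surj: "C = eval C m one a ` words_over n"
    and ord: "strict_total_order_on (words_over n) lt"
    and w_W: "w \<in> words_over n" and w'_W: "w' \<in> words_over n"
    and w_red: "reduced lt w" and w'_red: "reduced lt w'"
    and i: "w' \<notin> Comp w"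
    and ii: "eval C m one a w = eval C m one a w'"
    and iii: "\<forall>u\<in>Comp w \<union> Comp w'. \<forall>v\<in>Comp w \<union> Comp w'.
                eval C m one a u = eval C m one a v \<longrightarrow> u = v \<or> {u, v} = {w, w'}"
  shows "\<exists>g. valid_gen n C one g \<and> psi n C m one a w g = 0 \<and> \<bar>psi n C m one a w' g\<bar> = 1"
proof -
  let ?al = "eval C m one a"
  define P where "P = Comp w \<union> (Comp w' - {w'})"
  have wP: "w \<in> P" unfolding P_def using Comp_self by auto
  have EP: "E \<in> P" unfolding P_def using E_Comp by auto
  have w'P: "w' \<notin> P" unfolding P_def using i by auto
  have ww: "w \<noteq> w'" using i Comp_self by metis
  have inj: "\<And>x y. x \<in> P \<Longrightarrow> y \<in> P \<Longrightarrow> ?al x = ?al y \<Longrightarrow> x = y"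
  proof -
    fix x y assume xy: "x \<in> P" "y \<in> P" "?al x = ?al y"
    have x1: "x \<in> Comp w \<union> Comp w'" "y \<in> Comp w \<union> Comp w'" using xy(1,2) unfolding P_def by auto
    have "?al x = ?al y \<longrightarrow> x = y \<or> {x, y} = {w, w'}" using iii x1 by blast
    then have o: "x = y \<or> {x, y} = {w, w'}" using xy(3) by blast
    have nx: "x \<noteq> w'" "y \<noteq> w'" using xy(1,2) w'P by auto
    have "{x, y} \<noteq> {w, w'}"
    proof
      assume "{x, y} = {w, w'}"
      then have "w' \<in> {x, y}" by simp
      then show False using nx by simp
    qed
    then show "x = y" using o by simp
  qed
  have closed: "\<And>c d. c \<in> P \<Longrightarrow> d \<in> Comp c \<Longrightarrow> d \<in> P"
  proof -
    fix c d assume c: "c \<in> P" and d: "d \<in> Comp c"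
    show "d \<in> P"
    proof (cases "c \<in> Comp w")
      case True then show ?thesis using d Comp_trans unfolding P_def by blast
    next
      case False
      then have c': "c \<in> Comp w'" "c \<noteq> w'" using c unfolding P_def by auto
      then have "wsize c < wsize w'" using Comp_lt by blast
      moreover have "wsize d \<le> wsize c" using d Comp_size by blast
      ultimately have "d \<noteq> w'" by auto
      moreover have "d \<in> Comp w'" using c'(1) d Comp_trans by blast
      ultimately show ?thesis unfolding P_def by simp
    qed
  qed
  have varsP: "\<And>c. c \<in> P \<Longrightarrow> vars c \<subseteq> {1..n}"
  proof -
    fix c assume "c \<in> P"
    then have "c \<in> Comp w \<or> c \<in> Comp w'" unfolding P_def by auto
    then have "vars c \<subseteq> vars w \<or> vars c \<subseteq> vars w'" using Comp_vars by blast
    then show "vars c \<subseteq> {1..n}" using w_W w'_W unfolding words_over_def by blast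
  qed
  have redP: "\<And>c. c \<in> P \<Longrightarrow> reduced lt c"
  proof -
    fix c assume "c \<in> P"
    then have "c \<in> Comp w \<or> c \<in> Comp w'" unfolding P_def by auto
    then show "reduced lt c" using reduced_Comp w_red w'_red by blast
  qed
  have inC: "\<And>c. c \<in> P \<Longrightarrow> ?al c \<in> C" using eval_in[OF L a_in] varsP by blast
  have subP: "\<And>c. c \<in> Comp w' \<Longrightarrow> c \<noteq> w' \<Longrightarrow> c \<in> P" unfolding P_def by blast
  have w'v: "vars w' \<subseteq> {1..n}" using w'_W unfolding words_over_def by blast
  have w'nf: "\<not> forbidden lt w'" using w'_red Comp_self unfolding reduced_def by metis
  have alE: "?al E = one" by simp
  have fin: "\<And>g u'. \<forall>c\<in>P. \<forall>j. c = Var j \<longrightarrow> g \<noteq> GX j \<Longrightarrow>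
      \<forall>c\<in>P. \<forall>p q. c = Mul p q \<longrightarrow> bracket one (?al p) (?al q) g = 0 \<Longrightarrow>
      \<forall>c\<in>P. \<forall>p q. c = LDiv p q \<longrightarrow> bracket one (?al p) (?al c) g = 0 \<Longrightarrow>
      u' \<in> P \<Longrightarrow> psi n C m one a u' g = 0"
  proof -
    fix g u'
    assume H1: "\<forall>c\<in>P. \<forall>j. c = Var j \<longrightarrow> g \<noteq> GX j"
      and H2: "\<forall>c\<in>P. \<forall>p q. c = Mul p q \<longrightarrow> bracket one (?al p) (?al q) g = 0"
      and H3: "\<forall>c\<in>P. \<forall>p q. c = LDiv p q \<longrightarrow> bracket one (?al p) (?al c) g = 0"
      and u: "u' \<in> P"
    have sub: "\<And>c. c \<in> Comp u' \<Longrightarrow> c \<in> P" using closed u by blast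
    show "psi n C m one a u' g = 0"
    proof (rule psi_zero[OF L a_in varsP[OF u] reduced_noR[OF redP[OF u]]])
      show "\<forall>j. Var j \<in> Comp u' \<longrightarrow> g \<noteq> GX j" using H1 sub by blast
      show "\<forall>p q. Mul p q \<in> Comp u' \<longrightarrow> bracket one (?al p) (?al q) g = 0" using H2 sub by blast
      show "\<forall>p q. LDiv p q \<in> Comp u' \<longrightarrow> bracket one (?al p) (?al (LDiv p q)) g = 0"
        using H3 sub by blast
    qed
  qed
  show ?thesis
  proof (cases w')
    case E
    then show ?thesis using i E_Comp by metis
  next
    case (RDiv u v)
    then show ?thesis using w'nf by (metis forb)
  next
    case (Var k)
    have "psi n C m one a w (GX k) = 0"
    proof (rule psi_zero[OF L a_in])
      show "vars w \<subseteq> {1..n}" using w_W unfolding words_over_def by blast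
      show "noR w" using reduced_noR w_red by blast
      show "\<forall>j. Var j \<in> Comp w \<longrightarrow> GX k \<noteq> GX j" using i Var by auto
    qed (auto simp: bracket_GX)
    moreover have "psi n C m one a w' (GX k) = 1" using Var psi_Var[OF L a_in] by (simp add: basis_def)
    moreover have "valid_gen n C one (GX k)" using w'v Var unfolding valid_gen_def by auto
    ultimately show ?thesis by fastforce
  next
    case (Mul u' v')
    have uP: "u' \<in> P" "v' \<in> P" using subP Mul Comp_self by auto
    have uE: "u' \<noteq> E" "v' \<noteq> E" using w'nf Mul forb(7,10) by metis+
    have u1: "?al u' \<noteq> one" "?al v' \<noteq> one" using inj[OF uP(1) EP] inj[OF uP(2) EP] uE by auto
    define g where "g = GP (Upair (?al u') (?al v'))"
    have H1: "\<forall>c\<in>P. \<forall>j. c = Var j \<longrightarrow> g \<noteq> GX j" unfolding g_def by simp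
    have H2: "\<forall>c\<in>P. \<forall>p q. c = Mul p q \<longrightarrow> bracket one (?al p) (?al q) g = 0"
    proof (intro ballI allI impI)
      fix c p q assume cP: "c \<in> P" and c: "c = Mul p q"
      have pq: "p \<in> P" "q \<in> P" using closed[OF cP] c Comp_self by auto
      show "bracket one (?al p) (?al q) g = 0"
      proof (rule ccontr)
        assume "bracket one (?al p) (?al q) g \<noteq> 0"
        then have "(?al p = ?al u' \<and> ?al q = ?al v') \<or> (?al p = ?al v' \<and> ?al q = ?al u')"
          unfolding g_def by (rule bracket_nz)
        then show False
        proof
          assume "?al p = ?al u' \<and> ?al q = ?al v'"
          then have "p = u'" "q = v'" using inj pq uP by auto
          then show False using c cP w'P Mul by simp
        next
          assume h: "?al p = ?al v' \<and> ?al q = ?al u'"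
          then have pv: "p = v'" "q = u'" using inj pq uP by auto
          have "?al c = ?al w" using ii Mul c pv comm[OF L a_in] inC uP by simp
          then have "c = w" using inj cP wP by blast
          then have wm: "w = Mul v' u'" using c pv by simp
          have "\<not> forbidden lt w" using w_red Comp_self unfolding reduced_def by metis
          then have "\<not> lt v' u'" using wm forb(2) by metis
          moreover have "\<not> lt u' v'" using w'nf Mul forb(2) by metis
          moreover have "u' \<noteq> v'" using ww wm Mul by auto
          moreover have "u' \<in> words_over n" "v' \<in> words_over n" using varsP uP unfolding words_over_def by auto
          ultimately show False using ord unfolding strict_total_order_on_def by blast
        qed
      qed
    qed
    have H3: "\<forall>c\<in>P. \<forall>p q. c = LDiv p q \<longrightarrow> bracket one (?al p) (?al c) g = 0"
    proof (intro ballI allI impI)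
      fix c p q assume cP: "c \<in> P" and c: "c = LDiv p q"
      have pq: "p \<in> P" "q \<in> P" using closed[OF cP] c Comp_self by auto
      show "bracket one (?al p) (?al c) g = 0"
      proof (rule ccontr)
        assume "bracket one (?al p) (?al c) g \<noteq> 0"
        then have "(?al p = ?al u' \<and> ?al c = ?al v') \<or> (?al p = ?al v' \<and> ?al c = ?al u')"
          unfolding g_def by (rule bracket_nz)
        then show False
        proof
          assume "?al p = ?al u' \<and> ?al c = ?al v'"
          then have "p = u'" "c = v'" using inj pq uP cP by auto
          then show False using w'nf Mul c by (metis forb)
        next
          assume "?al p = ?al v' \<and> ?al c = ?al u'"
          then have "p = v'" "c = u'" using inj pq uP cP by auto
          then show False using w'nf Mul c by (metis forb)
        qed
      qed
    qed
    have z: "psi n C m one a w g = 0" "psi n C m one a u' g = 0" "psi n C m one a v' g = 0"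
      using fin[OF H1 H2 H3] wP uP by auto
    have "psi n C m one a w' g = 1"
      using psi_Mul[OF L a_in, of u' v' g] w'v reduced_noR[OF w'_red] Mul z bracket_one[OF u1]
      unfolding g_def by simp
    moreover have "valid_gen n C one g" unfolding valid_gen_def g_def using inC uP u1 by auto
    ultimately show ?thesis using z by fastforce
  next
    case (LDiv u' v')
    have uP: "u' \<in> P" "v' \<in> P" using subP LDiv Comp_self by auto
    have uE: "u' \<noteq> E" using w'nf LDiv by (metis forb)
    have u1: "?al u' \<noteq> one" using inj[OF uP(1) EP] uE by auto
    have ldw: "?al w' = ldiv C m (?al u') (?al v')" using LDiv by simp
    have lp: "m (?al u') (?al w) = ?al v'" using ldiv_props[OF L a_in] inC uP ldw ii by metis
    have w1: "?al w \<noteq> one"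
    proof
      assume h: "?al w = one"
      then have "?al v' = ?al u'" using lp one_r[OF L a_in] inC uP by metis
      then have "u' = v'" using inj uP by metis
      then show False using w'nf LDiv by (metis forb)
    qed
    define g where "g = GP (Upair (?al u') (?al w))"
    have H1: "\<forall>c\<in>P. \<forall>j. c = Var j \<longrightarrow> g \<noteq> GX j" unfolding g_def by simp
    have H2: "\<forall>c\<in>P. \<forall>p q. c = Mul p q \<longrightarrow> bracket one (?al p) (?al q) g = 0"
    proof (intro ballI allI impI)
      fix c p q assume cP: "c \<in> P" and c: "c = Mul p q"
      have pq: "p \<in> P" "q \<in> P" using closed[OF cP] c Comp_self by auto
      show "bracket one (?al p) (?al q) g = 0"
      proof (rule ccontr)
        assume "bracket one (?al p) (?al q) g \<noteq> 0"
        then have "(?al p = ?al u' \<and> ?al q = ?al w) \<or> (?al p = ?al w \<and> ?al q = ?al u')"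
          unfolding g_def by (rule bracket_nz)
        then show False
        proof
          assume "?al p = ?al u' \<and> ?al q = ?al w"
          then have pv: "p = u'" "q = w" using inj pq uP wP by auto
          then have "?al c = ?al v'" using c lp by simp
          then have "c = v'" using inj cP uP by blast
          then show False using w'nf LDiv c pv by (metis forb)
        next
          assume "?al p = ?al w \<and> ?al q = ?al u'"
          then have pv: "p = w" "q = u'" using inj pq uP wP by auto
          then have "?al c = ?al v'" using c lp comm[OF L a_in] inC uP wP by simp
          then have "c = v'" using inj cP uP by blast
          then show False using w'nf LDiv c pv by (metis forb)
        qed
      qed
    qed
    have H3: "\<forall>c\<in>P. \<forall>p q. c = LDiv p q \<longrightarrow> bracket one (?al p) (?al c) g = 0"
    proof (intro ballI allI impI)
      fix c p q assume cP: "c \<in> P" and c: "c = LDiv p q"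
      have pq: "p \<in> P" "q \<in> P" using closed[OF cP] c Comp_self by auto
      show "bracket one (?al p) (?al c) g = 0"
      proof (rule ccontr)
        assume "bracket one (?al p) (?al c) g \<noteq> 0"
        then have "(?al p = ?al u' \<and> ?al c = ?al w) \<or> (?al p = ?al w \<and> ?al c = ?al u')"
          unfolding g_def by (rule bracket_nz)
        then show False
        proof
          assume "?al p = ?al u' \<and> ?al c = ?al w"
          then have pv: "p = u'" "c = w" using inj pq uP wP cP by auto
          have "m (?al u') (?al c) = ?al q"
            using ldiv_props[OF L a_in] inC pq uP c pv by simp
          then have "?al q = ?al v'" using lp pv by simp
          then have "q = v'" using inj pq uP by blast
          then show False using pv c LDiv ww by simp
        next
          assume "?al p = ?al w \<and> ?al c = ?al u'"
          then have pv: "p = w" "c = u'" using inj pq uP wP cP by auto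
          have "m (?al w) (?al c) = ?al q"
            using ldiv_props[OF L a_in] inC pq wP c pv by simp
          then have "?al q = ?al v'" using lp pv comm[OF L a_in] inC uP wP by metis
          then have "q = v'" using inj pq uP by blast
          then show False using w'nf LDiv c pv by (metis forb)
        qed
      qed
    qed
    have z: "psi n C m one a w g = 0" "psi n C m one a u' g = 0" "psi n C m one a v' g = 0"
      using fin[OF H1 H2 H3] wP uP by auto
    have "psi n C m one a w' g = -1"
      using psi_LDiv[OF L a_in, of u' v' g] w'v reduced_noR[OF w'_red] LDiv z bracket_one[OF u1 w1] ii
      unfolding g_def by simp
    moreover have "valid_gen n C one g" unfolding valid_gen_def g_def using inC uP wP u1 w1 by auto
    ultimately show ?thesis using z by fastforce
  qed
qed

end
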